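(* Let $\gamma>0$. There exist $C,D>0$ such that for all $x\in\mathbb{R}^d$, $$\mathbb{E}\big(T(B_\gamma,x+B_\gamma)\big)\le C\|x\|+D.$$ Moreover there exist $a,b,c>0$ such that for all $r>0$, $$\mathbb{P}\big(T(B_\gamma,B_r)\ge ar\big)\le b\exp(-cr).$$
   Context: $\mu$ is a probability measure on $(0,+\infty)$, $B_r$ the closed Euclidean ball of radius $r$ at $0$. Let $\chi$ be a Poisson point process on $\mathbb{R}^d\times[0,+\infty)\times(0,+\infty)$ with intensity the product of Lebesgue measure on $\mathbb{R}^d\times[0,+\infty)$ and $\mu$. Passage times: $\tau(x,x)=0$; for each $(c,t,r)\in\chi$ and $y\in(c+B_r)\setminus\{c\}$, $\tau(c,y)=t$; otherwise $\tau(x,y)=+\infty$. A path from $a$ to $b$ is a finite sequence $(a=x_0,\dots,x_k=b)$ of distinct points; $T(\pi)=\sum_{i=0}^{k-1}\tau(x_i,x_{i+1})$. For $A\subset\mathbb{R}^d$, $x\in\mathbb{R}^d$: $T(A,x)=\inf\{T(\pi):\pi\text{ a path from some }a\in A\text{ to }x\}$, and for $C\subset\mathbb{R}^d$, $T(A,C)=\sup_{c\in C}T(A,c)$. *)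

theory Defs
  imports "HOL-Probability.Probability"
begin

text \<open>Poisson point process on a measure space N (the intensity measure), realised as a
random set of points chi on the probability space M.\<close>

definition poisson_point_process :: "'w measure \<Rightarrow> 'p measure \<Rightarrow> ('w \<Rightarrow> 'p set) \<Rightarrow> bool" where
  "poisson_point_process M N chi \<longleftrightarrow>
     prob_space M \<and>
     (\<forall>A \<in> sets N. emeasure N A < \<infinity> \<longrightarrow>
        (AE \<omega> in M. finite (chi \<omega> \<inter> A)) \<and>
        (\<lambda>\<omega>. card (chi \<omega> \<inter> A)) \<in> measurable M (count_space UNIV) \<and>
        (\<forall>k::nat. measure M {\<omega> \<in> space M. card (chi \<omega> \<inter> A) = k}
                   = measure N A ^ k / fact k * exp (- measure N A))) \<and>
     (\<forall>\<A>. \<A> \<subseteq> sets N \<and> (\<forall>A\<in>\<A>. emeasure N A < \<infinity>) \<and> disjoint \<A> \<longrightarrow>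
        prob_space.indep_vars M (\<lambda>_. count_space (UNIV :: nat set))
          (\<lambda>A \<omega>. card (chi \<omega> \<inter> A)) \<A>)"

definition fpp_intensity :: "real measure \<Rightarrow> ('a::euclidean_space \<times> real \<times> real) measure" where
  "fpp_intensity \<mu> = lborel \<Otimes>\<^sub>M (restrict_space lborel {0..} \<Otimes>\<^sub>M \<mu>)"

text \<open>Passage time tau(x,y) for a configuration X of points (c,t,r). If several points share
the centre x (a null event), the smallest time is taken.\<close>

definition tau :: "('a::euclidean_space \<times> real \<times> real) set \<Rightarrow> 'a \<Rightarrow> 'a \<Rightarrow> ennreal" where
  "tau X x y = (if x = y then 0
     else (INF t \<in> {t. \<exists>r. (x, t, r) \<in> X \<and> y \<in> cball x r}. ennreal t))"

definition path_time :: "('a::euclidean_space \<times> real \<times> real) set \<Rightarrow> 'a list \<Rightarrow> ennreal" where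
  "path_time X xs = (\<Sum>i < length xs - 1. tau X (xs ! i) (xs ! Suc i))"

definition T_pt :: "('a::euclidean_space \<times> real \<times> real) set \<Rightarrow> 'a set \<Rightarrow> 'a \<Rightarrow> ennreal" where
  "T_pt X A x = (INF xs \<in> {xs. xs \<noteq> [] \<and> distinct xs \<and> hd xs \<in> A \<and> last xs = x}. path_time X xs)"

definition T_set :: "('a::euclidean_space \<times> real \<times> real) set \<Rightarrow> 'a set \<Rightarrow> 'a set \<Rightarrow> ennreal" where
  "T_set X A C = (SUP c \<in> C. T_pt X A c)"

end

theory Submission
  imports Defs
begin


lemma path_time_Nil[simp]: "path_time X [] = 0"
  by (simp add: path_time_def)
lemma path_time_single[simp]: "path_time X [x] = 0"
  by (simp add: path_time_def)
lemma path_time_Cons2: "path_time X (x # y # zs) = tau X x y + path_time X (y # zs)"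
proof -
  have "length (x # y # zs) - 1 = Suc (length zs)" by simp
  then show ?thesis unfolding path_time_def
    by (simp only:) (subst sum.lessThan_Suc_shift, simp)
qed

lemma path_time_append0: "path_time X (xs @ y # ys) = path_time X (xs @ [y]) + path_time X (y # ys)"
proof (induction xs)
  case Nil then show ?case by simp
next
  case (Cons a xs)
  then show ?case by (cases xs) (auto simp: path_time_Cons2 add.assoc)
qed

lemma path_time_append: "ys \<noteq> [] \<Longrightarrow> path_time X (xs @ y # ys) = path_time X (xs @ [y]) + path_time X (y # ys)"
  by (rule path_time_append0)

lemma tau_self[simp]: "tau X x x = 0" by (simp add: tau_def)

lemma T_pt_le_path:
  assumes "xs \<noteq> []" "hd xs \<in> A" "last xs = x"
  shows "T_pt X A x \<le> path_time X xs"
  using assms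
proof (induction "length xs" arbitrary: xs rule: less_induct)
  case less
  show ?case
  proof (cases "distinct xs")
    case True
    then show ?thesis unfolding T_pt_def using less.prems by (intro INF_lower) auto
  next
    case False
    then obtain as y bs cs where xs: "xs = as @ [y] @ bs @ [y] @ cs"
      using not_distinct_decomp by blast
    define ys where "ys = as @ y # cs"
    have "path_time X xs = path_time X (as @ [y]) + (path_time X (y # bs @ [y]) + path_time X (y # cs))"
      unfolding xs using path_time_append0[of X as y "bs @ y # cs"] path_time_append0[of X "y # bs" y cs]
      by (simp only: append.simps append_assoc)
    also have "\<dots> \<ge> path_time X (as @ [y]) + path_time X (y # cs)" by (intro add_left_mono add_increasing) auto
    also have "path_time X (as @ [y]) + path_time X (y # cs) = path_time X ys"
      unfolding ys_def by (rule path_time_append0[symmetric])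
    finally have le: "path_time X ys \<le> path_time X xs" .
    have "ys \<noteq> []" "length ys < length xs" unfolding ys_def xs by auto
    moreover have "hd ys = hd xs" unfolding ys_def xs by (cases as) auto
    moreover have "last ys = last xs" unfolding ys_def xs by (cases cs) auto
    ultimately have "ys \<noteq> []" "hd ys \<in> A" "last ys = x" "length ys < length xs"
      using less.prems by auto
    then have "T_pt X A x \<le> path_time X ys" using less.hyps by blast
    then show ?thesis using le by simp
  qed
qed

lemma path_time_le:
  assumes "\<And>i. i < length xs - 1 \<Longrightarrow> tau X (xs ! i) (xs ! Suc i) \<le> f i"
  shows "path_time X xs \<le> (\<Sum>i<length xs - 1. f i)"
  unfolding path_time_def using assms by (intro sum_mono) auto

lemma tau_le:
  assumes "(x, t, r) \<in> X" "y \<in> cball x r"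
  shows "tau X x y \<le> ennreal t"
  unfolding tau_def using assms by (auto intro!: INF_lower)



locale fppS =
  fixes M :: "'w measure" and \<mu> :: "real measure"
    and chi :: "'w \<Rightarrow> ('a::euclidean_space \<times> real \<times> real) set"
    and \<rho> r0 :: real
  assumes mu_prob: "prob_space \<mu>" and mu_sets: "sets \<mu> = sets borel"
    and ppp: "poisson_point_process M (fpp_intensity \<mu>) chi"
    and rho_pos: "\<rho> > 0" and p_pos: "emeasure \<mu> {r0..} > 0"
begin

definition "S (w::'a) t = cball w \<rho> \<times> ({0..<t} \<times> {r0..})"
definition "U I w lv = (\<Union>i\<in>I. S (w i) (real (lv i)))"
definition "Ev I w K = (\<Union>lv\<in>{lv \<in> I \<rightarrow>\<^sub>E {0..K}. K \<le> sum lv I}. {\<omega> \<in> space M. card (chi \<omega> \<inter> U I w lv) = 0})"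
definition "\<theta> = measure lborel (cball (0::'a) \<rho>) * measure \<mu> {r0..}"

lemma M_prob: "prob_space M" using ppp unfolding poisson_point_process_def by blast

lemma S_sets: "S w t \<in> sets (fpp_intensity \<mu>)"
  unfolding S_def fpp_intensity_def using mu_sets
  by (intro pair_measureI) (auto simp: sets_restrict_space_iff)

lemma vol_eq: "emeasure lborel (cball (w::'a) \<rho>) = ennreal (measure lborel (cball (0::'a) \<rho>))"
  using rho_pos by (simp add: emeasure_cball measure_def)

lemma theta_pos: "\<theta> > 0"
proof -
  interpret P: prob_space \<mu> by (rule mu_prob)
  have "measure \<mu> {r0..} > 0" using p_pos by (simp add: P.emeasure_eq_measure)
  moreover have "measure lborel (cball (0::'a) \<rho>) > 0"
    using rho_pos by (simp add: measure_def emeasure_cball)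
  ultimately show ?thesis unfolding \<theta>_def by simp
qed

lemma S_emeasure:
  assumes "t \<ge> 0"
  shows "emeasure (fpp_intensity \<mu>) (S w t) = ennreal (\<theta> * t)"
proof -
  interpret P: prob_space \<mu> by (rule mu_prob)
  have sf1: "sigma_finite_measure (restrict_space lborel {0::real..})"
    by (intro sigma_finite_measure_restrict_space) (auto simp: lborel.sigma_finite_measure_axioms)
  have sf: "sigma_finite_measure (restrict_space lborel {0::real..} \<Otimes>\<^sub>M \<mu>)"
    by (intro sigma_finite_pair_measure sf1) (simp add: P.sigma_finite_measure_axioms)
  have B: "{0..<t} \<in> sets (restrict_space lborel {0::real..})"
    by (subst sets_restrict_space_iff) auto
  have C: "{r0..} \<in> sets \<mu>" using mu_sets by simp
  have "emeasure (fpp_intensity \<mu>) (S w t) =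
      emeasure lborel (cball w \<rho>) * emeasure (restrict_space lborel {0::real..} \<Otimes>\<^sub>M \<mu>) ({0..<t} \<times> {r0..})"
    unfolding fpp_intensity_def S_def
    using sf B C by (intro sigma_finite_measure.emeasure_pair_measure_Times) auto
  also have "emeasure (restrict_space lborel {0::real..} \<Otimes>\<^sub>M \<mu>) ({0..<t} \<times> {r0..}) =
     emeasure (restrict_space lborel {0::real..}) {0..<t} * emeasure \<mu> {r0..}"
    using B C by (intro P.emeasure_pair_measure_Times) auto
  also have "emeasure (restrict_space lborel {0::real..}) {0..<t} = ennreal t"
    using assms by (subst emeasure_restrict_space) (auto simp: Int_absorb2)
  finally have "emeasure (fpp_intensity \<mu>) (S w t) = emeasure lborel (cball w \<rho>) * (ennreal t * emeasure \<mu> {r0..})" .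
  also have "emeasure lborel (cball w \<rho>) = ennreal (measure lborel (cball (0::'a) \<rho>))" by (rule vol_eq)
  also have "emeasure \<mu> {r0..} = ennreal (measure \<mu> {r0..})" by (rule P.emeasure_eq_measure)
  finally show ?thesis unfolding \<theta>_def using assms
    by (simp add: ennreal_mult'[symmetric] mult_ac)
qed

lemma U_sets: "finite I \<Longrightarrow> U I w lv \<in> sets (fpp_intensity \<mu>)"
  unfolding U_def using S_sets by auto

lemma U_emeasure:
  assumes "finite I" and disj: "\<And>i j. i \<in> I \<Longrightarrow> j \<in> I \<Longrightarrow> i \<noteq> j \<Longrightarrow> 2 * \<rho> < dist (w i) (w j)"
  shows "emeasure (fpp_intensity \<mu>) (U I w lv) = ennreal (\<theta> * real (sum lv I))"
proof -
  have df: "disjoint_family_on (\<lambda>i. S (w i) (real (lv i))) I"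
    unfolding disjoint_family_on_def S_def
  proof (intro ballI impI)
    fix i j assume ij: "i \<in> I" "j \<in> I" "i \<noteq> j"
    have "cball (w i) \<rho> \<inter> cball (w j) \<rho> = {}"
    proof (rule ccontr)
      assume "cball (w i) \<rho> \<inter> cball (w j) \<rho> \<noteq> {}"
      then obtain z where "dist (w i) z \<le> \<rho>" "dist (w j) z \<le> \<rho>" by auto
      then have "dist (w i) (w j) \<le> 2 * \<rho>" using dist_triangle3[of "w i" "w j" z] by (simp add: dist_commute)
      with disj[OF ij] show False by linarith
    qed
    then show "cball (w i) \<rho> \<times> ({0..<real (lv i)} \<times> {r0..}) \<inter> cball (w j) \<rho> \<times> ({0..<real (lv j)} \<times> {r0..}) = {}"
      by blast
  qed
  have "emeasure (fpp_intensity \<mu>) (U I w lv) = (\<Sum>i\<in>I. emeasure (fpp_intensity \<mu>) (S (w i) (real (lv i))))"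
    unfolding U_def using df assms(1) S_sets by (intro sum_emeasure[symmetric]) auto
  also have "\<dots> = (\<Sum>i\<in>I. ennreal (\<theta> * real (lv i)))" by (simp add: S_emeasure)
  also have "\<dots> = ennreal (\<theta> * real (sum lv I))"
    using theta_pos by (subst sum_ennreal) (auto simp: sum_distrib_left)
  finally show ?thesis .
qed

lemma card_zero_prob:
  assumes "finite I" and disj: "\<And>i j. i \<in> I \<Longrightarrow> j \<in> I \<Longrightarrow> i \<noteq> j \<Longrightarrow> 2 * \<rho> < dist (w i) (w j)"
  shows "{\<omega> \<in> space M. card (chi \<omega> \<inter> U I w lv) = 0} \<in> sets M"
    "measure M {\<omega> \<in> space M. card (chi \<omega> \<inter> U I w lv) = 0} = exp (- \<theta> * real (sum lv I))"
proof -
  have em: "emeasure (fpp_intensity \<mu>) (U I w lv) = ennreal (\<theta> * real (sum lv I))"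
    by (rule U_emeasure[OF assms])
  have fin: "emeasure (fpp_intensity \<mu>) (U I w lv) < \<infinity>" using em by simp
  have meas: "measure (fpp_intensity \<mu>) (U I w lv) = \<theta> * real (sum lv I)"
  proof -
    have "0 \<le> \<theta> * real (sum lv I)" using theta_pos by (intro mult_nonneg_nonneg) (auto simp del: of_nat_sum)
    then show ?thesis using em by (simp add: measure_def)
  qed
  have pp: "(\<lambda>\<omega>. card (chi \<omega> \<inter> U I w lv)) \<in> measurable M (count_space UNIV)"
     "\<forall>k::nat. measure M {\<omega> \<in> space M. card (chi \<omega> \<inter> U I w lv) = k}
                   = measure (fpp_intensity \<mu>) (U I w lv) ^ k / fact k * exp (- measure (fpp_intensity \<mu>) (U I w lv))"
    using ppp U_sets[OF assms(1)] fin unfolding poisson_point_process_def by blast+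
  have "(\<lambda>\<omega>. card (chi \<omega> \<inter> U I w lv)) -` {0} \<inter> space M \<in> sets M"
    by (rule measurable_sets[OF pp(1)]) simp
  moreover have "(\<lambda>\<omega>. card (chi \<omega> \<inter> U I w lv)) -` {0} \<inter> space M = {\<omega> \<in> space M. card (chi \<omega> \<inter> U I w lv) = 0}"
    by auto
  ultimately show "{\<omega> \<in> space M. card (chi \<omega> \<inter> U I w lv) = 0} \<in> sets M" by simp
  show "measure M {\<omega> \<in> space M. card (chi \<omega> \<inter> U I w lv) = 0} = exp (- \<theta> * real (sum lv I))"
    using pp(2)[rule_format, of 0] meas by simp
qed

end


lemma geom_bound:
  fixes q :: real assumes "0 \<le> q" "q < 1"
  shows "(\<Sum>j\<in>{0..K}. q ^ j) \<le> 1 / (1 - q)"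
proof -
  have "(\<Sum>j\<in>{0..K}. q ^ j) = (\<Sum>j<Suc K. q ^ j)" by (simp add: atLeast0AtMost lessThan_Suc_atMost)
  also have "\<dots> = (1 - q ^ Suc K) / (1 - q)" using assms by (subst sum_gp_strict) auto
  also have "\<dots> \<le> 1 / (1 - q)" using assms by (intro divide_right_mono) auto
  finally show ?thesis .
qed

context fppS begin

lemma Ev_prob:
  assumes "finite I" and disj: "\<And>i j. i \<in> I \<Longrightarrow> j \<in> I \<Longrightarrow> i \<noteq> j \<Longrightarrow> 2 * \<rho> < dist (w i) (w j)"
  shows "Ev I w K \<in> sets M"
    "measure M (Ev I w K) \<le> exp (- \<theta> * real K / 2) * (1 / (1 - exp (- \<theta> / 2))) ^ card I"
proof -
  interpret MP: prob_space M by (rule M_prob)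
  define V where "V = {lv \<in> I \<rightarrow>\<^sub>E {0..K}. K \<le> sum lv I}"
  have finPi: "finite (I \<rightarrow>\<^sub>E {0..K})" using assms(1) by (intro finite_PiE) auto
  have finV: "finite V" unfolding V_def by (rule finite_subset[OF _ finPi]) auto
  have Ev: "Ev I w K = (\<Union>lv\<in>V. {\<omega> \<in> space M. card (chi \<omega> \<inter> U I w lv) = 0})"
    unfolding Ev_def V_def ..
  show "Ev I w K \<in> sets M" unfolding Ev using finV card_zero_prob(1)[OF assms] by (intro sets.finite_UN) auto
  define q where "q = exp (- \<theta> / 2)"
  have q: "0 \<le> q" "q < 1" unfolding q_def using theta_pos by auto
  have "measure M (Ev I w K) \<le> (\<Sum>lv\<in>V. measure M {\<omega> \<in> space M. card (chi \<omega> \<inter> U I w lv) = 0})"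
    unfolding Ev using finV card_zero_prob(1)[OF assms] by (intro measure_UNION_le) auto
  also have "\<dots> = (\<Sum>lv\<in>V. exp (- \<theta> * real (sum lv I)))"
    using card_zero_prob(2)[OF assms] by simp
  also have "\<dots> \<le> (\<Sum>lv\<in>V. exp (- \<theta> * real K / 2) * (\<Prod>i\<in>I. q ^ lv i))"
  proof (intro sum_mono)
    fix lv assume "lv \<in> V"
    then have K: "real K \<le> real (sum lv I)" unfolding V_def by (auto simp del: of_nat_sum)
    have "exp (- \<theta> * real (sum lv I)) = exp (- \<theta> * real (sum lv I) / 2) * exp (- \<theta> * real (sum lv I) / 2)"
      by (simp add: exp_add[symmetric])
    also have "\<dots> \<le> exp (- \<theta> * real K / 2) * exp (- \<theta> * real (sum lv I) / 2)"
      using K theta_pos by (intro mult_right_mono) (auto simp: mult_left_mono)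
    also have "exp (- \<theta> * real (sum lv I) / 2) = (\<Prod>i\<in>I. q ^ lv i)"
      unfolding q_def using assms(1)
      by (simp add: exp_sum[symmetric] exp_of_nat_mult[symmetric] sum_distrib_left sum_divide_distrib mult_ac)
    finally show "exp (- \<theta> * real (sum lv I)) \<le> exp (- \<theta> * real K / 2) * (\<Prod>i\<in>I. q ^ lv i)" .
  qed
  also have "\<dots> \<le> (\<Sum>lv\<in>I \<rightarrow>\<^sub>E {0..K}. exp (- \<theta> * real K / 2) * (\<Prod>i\<in>I. q ^ lv i))"
    using q finPi by (intro sum_mono2) (auto simp: V_def intro!: prod_nonneg mult_nonneg_nonneg)
  also have "\<dots> = exp (- \<theta> * real K / 2) * (\<Sum>lv\<in>I \<rightarrow>\<^sub>E {0..K}. \<Prod>i\<in>I. q ^ lv i)"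
    by (simp add: sum_distrib_left)
  also have "\<dots> = exp (- \<theta> * real K / 2) * (\<Prod>i\<in>I. \<Sum>j\<in>{0..K}. q ^ j)"
    by (subst prod_sum_PiE) (auto simp: assms(1))
  also have "\<dots> \<le> exp (- \<theta> * real K / 2) * (\<Prod>i\<in>I. 1 / (1 - q))"
    using q by (intro mult_left_mono prod_mono) (auto intro!: sum_nonneg geom_bound)
  finally show "measure M (Ev I w K) \<le> exp (- \<theta> * real K / 2) * (1 / (1 - exp (- \<theta> / 2))) ^ card I"
    by (simp add: q_def)
qed

lemma Ev_path:
  assumes "finite I" "\<omega> \<in> space M" "\<omega> \<notin> Ev I w K"
  shows "\<exists>c t R. (\<forall>i\<in>I. (c i, t i, R i) \<in> chi \<omega> \<and> c i \<in> cball (w i) \<rho> \<and> 0 \<le> t i \<and> r0 \<le> R i)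
           \<and> (\<Sum>i\<in>I. t i) \<le> real K + real (card I)"
proof -
  define P where "P i j \<longleftrightarrow> chi \<omega> \<inter> S (w i) (real j) \<noteq> {}" for i j
  define lv where "lv i = (if \<exists>j\<le>K. P i j then (LEAST j. P i j) - 1 else K)" for i
  have P0: "\<not> P i 0" for i unfolding P_def S_def by auto
  have notP: "\<not> P i (lv i)" for i
  proof (cases "\<exists>j\<le>K. P i j")
    case True
    then have ex: "\<exists>j. P i j" by blast
    have "(LEAST j. P i j) \<noteq> 0" using LeastI_ex[OF ex] P0 by metis
    then have "lv i < (LEAST j. P i j)" unfolding lv_def using True by simp
    then show ?thesis by (rule not_less_Least)
  next
    case False then show ?thesis unfolding lv_def by auto
  qed
  have lvK: "lv i \<le> K" for i
  proof (cases "\<exists>j\<le>K. P i j")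
    case True
    then obtain j where j: "j \<le> K" "P i j" by blast
    have "(LEAST j. P i j) \<le> j" by (rule Least_le) (rule j(2))
    then show ?thesis unfolding lv_def using True j by simp
  next
    case False then show ?thesis unfolding lv_def by auto
  qed
  define lv' where "lv' = restrict lv I"
  have lv'V: "lv' \<in> I \<rightarrow>\<^sub>E {0..K}" unfolding lv'_def using lvK by auto
  have "chi \<omega> \<inter> U I w lv' = {}"
    unfolding U_def lv'_def using notP unfolding P_def by auto
  then have "\<omega> \<in> {\<omega> \<in> space M. card (chi \<omega> \<inter> U I w lv') = 0}" using assms(2) by simp
  then have "\<not> K \<le> sum lv' I" using assms(3) lv'V unfolding Ev_def by blast
  then have sumlt: "sum lv I < K" unfolding lv'_def by simp
  have good: "\<exists>j\<le>K. P i j" if "i \<in> I" for i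
  proof (rule ccontr)
    assume "\<not> ?thesis"
    then have "lv i = K" unfolding lv_def by auto
    moreover have "lv i \<le> sum lv I" using assms(1) that by (intro member_le_sum) auto
    ultimately show False using sumlt by simp
  qed
  have Psuc: "P i (lv i + 1)" if "i \<in> I" for i
  proof -
    have ex: "\<exists>j. P i j" using good[OF that] by blast
    have "(LEAST j. P i j) \<noteq> 0" using LeastI_ex[OF ex] P0 by metis
    then have "lv i + 1 = (LEAST j. P i j)" unfolding lv_def using good[OF that] by simp
    then show ?thesis using LeastI_ex[OF ex] by simp
  qed
  have "\<forall>i\<in>I. \<exists>p. p \<in> chi \<omega> \<and> fst p \<in> cball (w i) \<rho> \<and> 0 \<le> fst (snd p) \<and> fst (snd p) < real (lv i + 1)
          \<and> r0 \<le> snd (snd p)"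
    using Psuc unfolding P_def S_def by fastforce
  then obtain p where p: "\<And>i. i \<in> I \<Longrightarrow> p i \<in> chi \<omega> \<and> fst (p i) \<in> cball (w i) \<rho> \<and> 0 \<le> fst (snd (p i))
      \<and> fst (snd (p i)) < real (lv i + 1) \<and> r0 \<le> snd (snd (p i))"
    by metis
  define c where "c i = fst (p i)" for i
  define t where "t i = fst (snd (p i))" for i
  define R where "R i = snd (snd (p i))" for i
  have "(\<Sum>i\<in>I. t i) \<le> (\<Sum>i\<in>I. real (lv i) + 1)"
  proof (intro sum_mono)
    fix i assume "i \<in> I" then show "t i \<le> real (lv i) + 1" using p[of i] unfolding t_def by simp
  qed
  also have "\<dots> = real (sum lv I) + real (card I)" by (simp add: sum.distrib)
  also have "\<dots> \<le> real K + real (card I)" using sumlt by (simp del: of_nat_sum)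
  finally have "(\<Sum>i\<in>I. t i) \<le> real K + real (card I)" .
  then show ?thesis using p unfolding c_def t_def R_def
    by (intro exI[of _ c] exI[of _ t] exI[of _ R]) (auto simp: c_def t_def R_def)
qed

end


lemma dist_chain: "dist ((a::real) *\<^sub>R k) (b *\<^sub>R k) = \<bar>a - b\<bar> * norm (k::'a::real_normed_vector)"
  by (simp add: dist_norm scaleR_left_diff_distrib[symmetric])

lemma chain_disj:
  fixes k :: "'a::real_normed_vector" and n :: nat
  assumes n1: "n \<ge> 1" and n2: "n \<ge> 2 \<Longrightarrow> 2 * \<rho> * (real n - 1) < norm k" and rho: "\<rho> > 0"
    and ij: "i \<le> n" "j \<le> n" "i \<noteq> j" "even i = even j"
  shows "2 * \<rho> < dist ((real i / real n) *\<^sub>R k) ((real j / real n) *\<^sub>R k)"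
proof -
  have "j \<noteq> Suc i" "i \<noteq> Suc j" using ij(4) by auto
  then have d: "i + 2 \<le> j \<or> j + 2 \<le> i" using ij(3) by arith
  then have n2': "n \<ge> 2" using ij(1,2) by linarith
  have "real n \<le> 2 * (real n - 1)" using n2' by simp
  then have "\<rho> * real n \<le> \<rho> * (2 * (real n - 1))" by (rule mult_left_mono) (use rho in auto)
  then have nk: "\<rho> * real n < norm k" using n2[OF n2'] by (simp add: mult_ac)
  have "2 \<le> \<bar>real i - real j\<bar>" using d by auto
  have "dist ((real i / real n) *\<^sub>R k) ((real j / real n) *\<^sub>R k) = \<bar>real i - real j\<bar> / real n * norm k"
    by (simp add: dist_chain diff_divide_distrib[symmetric] abs_divide)
  also have "\<dots> \<ge> 2 / real n * norm k"
    using \<open>2 \<le> \<bar>real i - real j\<bar>\<close> n1 by (intro mult_right_mono divide_right_mono) auto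
  finally have "2 / real n * norm k \<le> dist ((real i / real n) *\<^sub>R k) ((real j / real n) *\<^sub>R k)" .
  moreover have "2 * \<rho> < 2 / real n * norm k"
    using nk n1 by (simp add: field_simps)
  ultimately show ?thesis by linarith
qed

context fppS begin

lemma chain_path:
  fixes k c :: 'a and n K :: nat and \<gamma> :: real
  assumes geo: "\<rho> \<le> \<gamma>" "4 * \<rho> \<le> r0" and om: "\<omega> \<in> space M" and ck: "dist c k \<le> \<rho>"
    and n1: "n \<ge> 1" and nk: "norm k \<le> 2 * \<rho> * real n"
    and w_def: "w = (\<lambda>i. (real i / real n) *\<^sub>R k)"
    and ne: "\<omega> \<notin> Ev {i\<in>{0..n}. even i} w K" and no: "\<omega> \<notin> Ev {i\<in>{0..n}. odd i} w K"
  shows "T_pt (chi \<omega>) (cball 0 \<gamma>) c \<le> ennreal (2 * real K + real n + 1)"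
proof -
  define Ie where "Ie = {i\<in>{0..n}. even i}"
  define Io where "Io = {i\<in>{0..n}. odd i}"
  have fin: "finite Ie" "finite Io" unfolding Ie_def Io_def by auto
  obtain ce te Re where e: "\<forall>i\<in>Ie. (ce i, te i, Re i) \<in> chi \<omega> \<and> ce i \<in> cball (w i) \<rho> \<and> 0 \<le> te i \<and> r0 \<le> Re i"
    and se: "(\<Sum>i\<in>Ie. te i) \<le> real K + real (card Ie)"
    using Ev_path[OF fin(1) om, of w K] ne unfolding Ie_def by auto
  obtain co to Ro where o: "\<forall>i\<in>Io. (co i, to i, Ro i) \<in> chi \<omega> \<and> co i \<in> cball (w i) \<rho> \<and> 0 \<le> to i \<and> r0 \<le> Ro i"
    and so: "(\<Sum>i\<in>Io. to i) \<le> real K + real (card Io)"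
    using Ev_path[OF fin(2) om, of w K] no unfolding Io_def by auto
  define cc where "cc i = (if even i then ce i else co i)" for i
  define tt where "tt i = (if even i then te i else to i)" for i
  define RR where "RR i = (if even i then Re i else Ro i)" for i
  have pts: "(cc i, tt i, RR i) \<in> chi \<omega> \<and> cc i \<in> cball (w i) \<rho> \<and> 0 \<le> tt i \<and> r0 \<le> RR i" if "i \<le> n" for i
    using e o that unfolding cc_def tt_def RR_def Ie_def Io_def by auto
  have un: "{0..n} = Ie \<union> Io" and dj: "Ie \<inter> Io = {}" unfolding Ie_def Io_def by auto
  have "(\<Sum>i\<in>{0..n}. tt i) = (\<Sum>i\<in>Ie. tt i) + (\<Sum>i\<in>Io. tt i)"
    unfolding un using fin dj by (rule sum.union_disjoint)
  also have "(\<Sum>i\<in>Ie. tt i) = (\<Sum>i\<in>Ie. te i)" unfolding tt_def Ie_def by (intro sum.cong) auto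
  also have "(\<Sum>i\<in>Io. tt i) = (\<Sum>i\<in>Io. to i)" unfolding tt_def Io_def by (intro sum.cong) auto
  finally have "(\<Sum>i\<in>{0..n}. tt i) \<le> 2 * real K + real (card Ie + card Io)" using se so by simp
  also have "card Ie + card Io = n + 1"
    using card_Un_disjoint[OF fin dj] un[symmetric] by simp
  finally have sumtt: "(\<Sum>i\<in>{0..n}. tt i) \<le> 2 * real K + real n + 1" by simp
  have step: "dist (w i) (w (Suc i)) \<le> 2 * \<rho>" for i
  proof -
    have "dist (w i) (w (Suc i)) = norm k / real n"
      unfolding w_def dist_chain using n1 by (simp add: diff_divide_distrib[symmetric] abs_divide)
    also have "\<dots> \<le> 2 * \<rho>" using nk n1 by (simp add: field_simps)
    finally show ?thesis .
  qed
  have wn: "w n = k" unfolding w_def using n1 by simp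
  have w0: "w 0 = 0" unfolding w_def by simp
  define xs where "xs = map cc [0..<Suc n] @ [c]"
  have len: "length xs - 1 = Suc n" unfolding xs_def by simp
  have "path_time (chi \<omega>) xs \<le> (\<Sum>i<Suc n. ennreal (tt i))"
    unfolding len[symmetric]
  proof (rule path_time_le)
    fix i assume "i < length xs - 1"
    then have i: "i \<le> n" unfolding len by simp
    have xi: "xs ! i = cc i" unfolding xs_def using i by (simp add: nth_append)
    have p: "(cc i, tt i, RR i) \<in> chi \<omega>" "dist (w i) (cc i) \<le> \<rho>" "r0 \<le> RR i" using pts[OF i] by auto
    show "tau (chi \<omega>) (xs ! i) (xs ! Suc i) \<le> ennreal (tt i)"
    proof (cases "i < n")
      case True
      have xs1: "xs ! Suc i = cc (Suc i)" unfolding xs_def using True by (simp add: nth_append del: upt_Suc)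
      have p1: "dist (w (Suc i)) (cc (Suc i)) \<le> \<rho>" using pts[of "Suc i"] True by auto
      have "dist (cc i) (cc (Suc i)) \<le> dist (cc i) (w i) + dist (w i) (w (Suc i)) + dist (w (Suc i)) (cc (Suc i))"
        using dist_triangle[of "cc i" "cc (Suc i)" "w i"] dist_triangle[of "w i" "cc (Suc i)" "w (Suc i)"] by linarith
      also have "\<dots> \<le> RR i" using p p1 step[of i] geo by (simp add: dist_commute)
      finally have "cc (Suc i) \<in> cball (cc i) (RR i)" by simp
      then show ?thesis unfolding xi xs1 by (rule tau_le[OF p(1)])
    next
      case False
      then have "i = n" using i by simp
      have xs1: "xs ! Suc i = c" unfolding xs_def using \<open>i = n\<close> by (simp add: nth_append del: upt_Suc)
      have "dist (cc i) c \<le> dist (cc i) (w i) + dist (w i) c" by (rule dist_triangle)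
      also have "\<dots> \<le> RR i" using p ck geo wn \<open>i = n\<close> rho_pos by (simp add: dist_commute)
      finally have "c \<in> cball (cc i) (RR i)" by simp
      then show ?thesis unfolding xi xs1 by (rule tau_le[OF p(1)])
    qed
  qed
  also have "(\<Sum>i<Suc n. ennreal (tt i)) = ennreal (\<Sum>i<Suc n. tt i)"
    using pts by (intro sum_ennreal) auto
  also have "(\<Sum>i<Suc n. tt i) = (\<Sum>i\<in>{0..n}. tt i)" by (simp add: atLeast0AtMost lessThan_Suc_atMost)
  finally have pt: "path_time (chi \<omega>) xs \<le> ennreal (2 * real K + real n + 1)"
    using sumtt by (meson ennreal_leI order_trans)
  have "hd xs \<in> cball 0 \<gamma>"
  proof -
    have "hd xs = cc 0" unfolding xs_def by (simp del: upt_Suc add: upt_conv_Cons)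
    moreover have "dist 0 (cc 0) \<le> \<rho>" using pts[of 0] w0 by auto
    ultimately show ?thesis using geo by simp
  qed
  moreover have "xs \<noteq> []" "last xs = c" unfolding xs_def by auto
  ultimately have "T_pt (chi \<omega>) (cball 0 \<gamma>) c \<le> path_time (chi \<omega>) xs"
    using T_pt_le_path by blast
  with pt show ?thesis by (meson order_trans)
qed

end


lemma lattice_net:
  fixes r \<rho> :: real
  assumes rho: "\<rho> > 0" and r: "r \<ge> 0"
  shows "\<exists>Kn::'a::euclidean_space set. finite Kn \<and>
     card Kn \<le> (2 * (nat \<lceil>r / (\<rho> / DIM('a))\<rceil> + 1) + 1) ^ DIM('a) \<and>
     (\<forall>c\<in>cball 0 r. \<exists>k\<in>Kn. dist c k \<le> \<rho>) \<and> (\<forall>k\<in>Kn. norm k \<le> r + \<rho>)"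
proof -
  define D where "D = DIM('a)"
  define \<delta> where "\<delta> = \<rho> / D"
  define N where "N = nat \<lceil>r / \<delta>\<rceil> + 1"
  have D: "real D > 0" unfolding D_def by simp
  have dl: "\<delta> > 0" unfolding \<delta>_def using rho D by simp
  define f :: "('a \<Rightarrow> int) \<Rightarrow> 'a" where "f z = (\<Sum>b\<in>Basis. (\<delta> * of_int (z b)) *\<^sub>R b)" for z
  define Kn where "Kn = f ` (Basis \<rightarrow>\<^sub>E {-int N..int N}) \<inter> cball 0 (r + \<rho>)"
  have finPi: "finite ((Basis::'a set) \<rightarrow>\<^sub>E {-int N..int N})" by (intro finite_PiE) auto
  have "card Kn \<le> card (f ` (Basis \<rightarrow>\<^sub>E {-int N..int N}))"
    unfolding Kn_def using finPi by (intro card_mono) auto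
  also have "\<dots> \<le> card ((Basis::'a set) \<rightarrow>\<^sub>E {-int N..int N})" using finPi by (rule card_image_le)
  also have "\<dots> = (2 * N + 1) ^ D"
    by (simp add: card_PiE D_def) (simp add: nat_add_distrib nat_mult_distrib)
  finally have card: "card Kn \<le> (2 * N + 1) ^ D" .
  have cover: "\<exists>k\<in>Kn. dist c k \<le> \<rho>" if c: "c \<in> cball 0 r" for c
  proof -
    define z where "z b = round (inner c b / \<delta>)" for b
    have zrange: "-int N \<le> z b \<and> z b \<le> int N" if b: "b \<in> Basis" for b
    proof -
      have "\<bar>inner c b\<bar> \<le> r" using Basis_le_norm[OF b, of c] c by simp
      then have a1: "\<bar>inner c b / \<delta>\<bar> \<le> r / \<delta>" using dl by (simp add: abs_divide divide_right_mono)
      have a2: "\<bar>of_int (z b) - inner c b / \<delta>\<bar> \<le> 1/2" unfolding z_def by (rule of_int_round_abs_le)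
      have a3: "r / \<delta> \<le> real (nat \<lceil>r / \<delta>\<rceil>)" using r dl by linarith
      have "- real N \<le> real_of_int (z b) \<and> real_of_int (z b) \<le> real N"
      proof -
        have "real N = real (nat \<lceil>r / \<delta>\<rceil>) + 1" unfolding N_def by simp
        then show ?thesis using a1 a2 a3 unfolding abs_le_iff by linarith
      qed
      then show ?thesis by (metis of_int_le_iff of_int_minus of_int_of_nat_eq)
    qed
    define z' where "z' = restrict z Basis"
    have z'Pi: "z' \<in> Basis \<rightarrow>\<^sub>E {-int N..int N}" unfolding z'_def using zrange by auto
    have fz: "f z' = (\<Sum>b\<in>Basis. (\<delta> * of_int (z b)) *\<^sub>R b)" unfolding f_def z'_def by (intro sum.cong) auto
    have "c - f z' = (\<Sum>b\<in>Basis. (inner c b - \<delta> * of_int (z b)) *\<^sub>R b)"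
      unfolding fz by (subst (1) euclidean_representation[symmetric, of c])
        (simp add: sum_subtractf[symmetric] scaleR_left_diff_distrib)
    then have "norm (c - f z') \<le> (\<Sum>b\<in>Basis. norm ((inner c b - \<delta> * of_int (z b)) *\<^sub>R b))"
      by (simp only: norm_sum)
    also have "\<dots> \<le> (\<Sum>b\<in>(Basis::'a set). \<delta> / 2)"
    proof (intro sum_mono)
      fix b :: 'a assume b: "b \<in> Basis"
      have "\<bar>of_int (z b) - inner c b / \<delta>\<bar> \<le> 1/2" unfolding z_def by (rule of_int_round_abs_le)
      then have "\<delta> * \<bar>of_int (z b) - inner c b / \<delta>\<bar> \<le> \<delta> * (1/2)" using dl by (intro mult_left_mono) auto
      moreover have "\<delta> * \<bar>of_int (z b) - inner c b / \<delta>\<bar> = \<bar>inner c b - \<delta> * of_int (z b)\<bar>"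
      proof -
        have "\<delta> * \<bar>of_int (z b) - inner c b / \<delta>\<bar> = \<bar>\<delta> * (of_int (z b) - inner c b / \<delta>)\<bar>"
          using dl by (simp add: abs_mult)
        also have "\<delta> * (of_int (z b) - inner c b / \<delta>) = - (inner c b - \<delta> * of_int (z b))"
          using dl by (simp add: field_simps)
        finally show ?thesis by simp
      qed
      ultimately show "norm ((inner c b - \<delta> * of_int (z b)) *\<^sub>R b) \<le> \<delta> / 2" using b by simp
    qed
    also have "\<dots> = real D * \<delta> / 2" unfolding D_def by simp
    also have "\<dots> = \<rho> / 2" unfolding \<delta>_def using D by simp
    finally have d: "dist c (f z') \<le> \<rho>" using rho by (simp add: dist_norm)
    have "norm (f z') \<le> norm c + dist c (f z')" by (metis dist_norm norm_triangle_sub norm_minus_commute)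
    then have "norm (f z') \<le> r + \<rho>" using c d by simp
    then have "f z' \<in> Kn" unfolding Kn_def using z'Pi by auto
    with d show ?thesis by blast
  qed
  have "finite Kn" unfolding Kn_def using finPi by auto
  moreover have "\<forall>k\<in>Kn. norm k \<le> r + \<rho>" unfolding Kn_def by auto
  ultimately show ?thesis using card cover unfolding N_def \<delta>_def D_def by blast
qed



lemma exp_gen: "exp (P::real) * (2 * (exp A * exp Q)) = exp (P + ln 2 + Q + A)"
  by (simp add: exp_add)

context fppS begin

lemma claim2:
  fixes \<gamma> :: real
  assumes geo: "\<rho> \<le> \<gamma>" "4 * \<rho> \<le> r0"
  shows "\<exists>a b c. a > 0 \<and> b > 0 \<and> c > 0 \<and>
            (\<forall>r > 0. \<exists>E \<in> sets M.
               {\<omega> \<in> space M. T_set (chi \<omega>) (cball 0 \<gamma>) (cball (0::'a) r) \<ge> ennreal (a * r)} \<subseteq> E \<and>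
               measure M E \<le> b * exp (- c * r))"
proof -
  interpret MP: prob_space M by (rule M_prob)
  define D where "D = DIM('a)"
  have D: "real D > 0" unfolding D_def by simp
  define \<delta> where "\<delta> = \<rho> / D"
  have dl: "\<delta> > 0" unfolding \<delta>_def using rho_pos D by simp
  define Aq where "Aq = 1 / (1 - exp (- \<theta> / 2))"
  have Aq1: "Aq \<ge> 1" unfolding Aq_def using theta_pos by (simp add: field_simps)
  define lA where "lA = ln Aq"
  have lA: "lA \<ge> 0" unfolding lA_def using Aq1 by simp
  have Aqe: "Aq = exp lA" unfolding lA_def using Aq1 by simp
  define xa where "xa = 2 * D / \<delta> + lA / (2 * \<rho>) + 1"
  define xb where "xb = 4 * D + 5 / 2 * lA + ln 2"
  define X where "X r = 2 * D * (r / \<delta> + 2) + ((r + \<rho>) / (2 * \<rho>) + 2) * lA + ln 2 + r" for r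
  have Xaff: "X r = xa * r + xb" for r
    unfolding X_def xa_def xb_def using dl rho_pos by (simp add: field_simps)
  define Bnd where "Bnd r = 2 * (2 * X r / \<theta> + 1) + (r + \<rho>) / (2 * \<rho>) + 2" for r
  define ba where "ba = 2 * 2 * xa / \<theta> + 1 / (2 * \<rho>)"
  define bb where "bb = 2 * (2 * xb / \<theta> + 1) + 1 / 2 + 2"
  have Baff: "Bnd r = ba * r + bb" for r
    unfolding Bnd_def ba_def bb_def Xaff using theta_pos rho_pos by (simp add: field_simps)
  define a where "a = \<bar>ba\<bar> + \<bar>bb\<bar> + 1"
  have apos: "a > 0" unfolding a_def by simp
  have Blt: "Bnd r < a * r" if "r \<ge> 1" for r
  proof -
    have f1: "ba * r \<le> \<bar>ba\<bar> * r" using that by (intro mult_right_mono) auto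
    have f2: "bb \<le> \<bar>bb\<bar> * r"
      using mult_left_mono[of 1 r "\<bar>bb\<bar>"] that abs_ge_self[of bb] by simp
    have f3: "a * r = \<bar>ba\<bar> * r + \<bar>bb\<bar> * r + r" unfolding a_def by (simp add: distrib_right)
    show ?thesis unfolding Baff using f1 f2 f3 that by linarith
  qed
  have main: "\<exists>E \<in> sets M.
               {\<omega> \<in> space M. T_set (chi \<omega>) (cball 0 \<gamma>) (cball (0::'a) r) \<ge> ennreal (a * r)} \<subseteq> E \<and>
               measure M E \<le> exp (- r)" if r1: "r \<ge> 1" for r
  proof -
    have r0: "r \<ge> 0" using r1 by simp
    define N where "N = nat \<lceil>r / \<delta>\<rceil> + 1"
    obtain Kn :: "'a set" where Kn: "finite Kn" "card Kn \<le> (2 * N + 1) ^ D"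
      "\<forall>c\<in>cball 0 r. \<exists>k\<in>Kn. dist c k \<le> \<rho>" "\<forall>k\<in>Kn. norm k \<le> r + \<rho>"
      using lattice_net[OF rho_pos r0] unfolding N_def \<delta>_def D_def by blast
    have X0: "X r \<ge> 0" unfolding X_def using r0 dl rho_pos lA D
      by (intro add_nonneg_nonneg mult_nonneg_nonneg divide_nonneg_nonneg) auto
    define K where "K = nat \<lceil>2 * X r / \<theta>\<rceil>"
    have y0: "0 \<le> 2 * X r / \<theta>" using X0 theta_pos by simp
    have Kc: "real K = of_int \<lceil>2 * X r / \<theta>\<rceil>" unfolding K_def using y0 by simp
    have K1: "real K \<le> 2 * X r / \<theta> + 1" using Kc ceiling_correct[of "2 * X r / \<theta>"] by linarith
    have K2: "\<theta> * real K / 2 \<ge> X r"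
    proof -
      have "2 * X r / \<theta> \<le> real K" using Kc ceiling_correct[of "2 * X r / \<theta>"] by linarith
      then show ?thesis using theta_pos by (simp add: field_simps)
    qed
    define nk where "nk k = max 1 (nat \<lceil>norm k / (2 * \<rho>)\<rceil>)" for k :: 'a
    define wk where "wk k = (\<lambda>i. (real i / real (nk k)) *\<^sub>R k)" for k :: 'a
    define Ie where "Ie k = {i\<in>{0..nk k}. even i}" for k :: 'a
    define Io where "Io k = {i\<in>{0..nk k}. odd i}" for k :: 'a
    define E where "E = (\<Union>k\<in>Kn. Ev (Ie k) (wk k) K \<union> Ev (Io k) (wk k) K)"
    have nk1: "nk k \<ge> 1" for k unfolding nk_def by simp
    have nkn: "norm k \<le> 2 * \<rho> * real (nk k)" for k
    proof -
      have "norm k / (2 * \<rho>) \<le> real (nk k)" unfolding nk_def by linarith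
      then show ?thesis using rho_pos by (simp add: field_simps)
    qed
    have nk2: "2 * \<rho> * (real (nk k) - 1) < norm k" if "nk k \<ge> 2" for k
    proof -
      have "real (nk k) = real (nat \<lceil>norm k / (2 * \<rho>)\<rceil>)" using that unfolding nk_def by (simp add: max_def split: if_splits)
      then have "real (nk k) - 1 < norm k / (2 * \<rho>)" using that by linarith
      then show ?thesis using rho_pos by (simp add: field_simps)
    qed
    have nkb: "real (nk k) \<le> (r + \<rho>) / (2 * \<rho>) + 1" if "k \<in> Kn" for k
    proof -
      have "norm k / (2 * \<rho>) \<le> (r + \<rho>) / (2 * \<rho>)" using Kn(4) that rho_pos by (simp add: divide_right_mono)
      moreover have "real (nk k) \<le> max 1 (norm k / (2 * \<rho>) + 1)" unfolding nk_def by (simp add: max_def)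
      ultimately show ?thesis using r0 rho_pos by (simp add: max_def field_simps split: if_splits)
    qed
    have disj: "2 * \<rho> < dist (wk k i) (wk k j)"
      if "I = Ie k \<or> I = Io k" "i \<in> I" "j \<in> I" "i \<noteq> j" for I k i j
    proof -
      have "i \<le> nk k" "j \<le> nk k" "even i = even j" using that unfolding Ie_def Io_def by auto
      then show ?thesis unfolding wk_def using that(4) by (intro chain_disj[OF nk1 nk2 rho_pos])
    qed
    have disjE: "\<And>i j. i \<in> Ie k \<Longrightarrow> j \<in> Ie k \<Longrightarrow> i \<noteq> j \<Longrightarrow> 2 * \<rho> < dist (wk k i) (wk k j)"
      "\<And>i j. i \<in> Io k \<Longrightarrow> j \<in> Io k \<Longrightarrow> i \<noteq> j \<Longrightarrow> 2 * \<rho> < dist (wk k i) (wk k j)" for k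
      using disj by blast+
    have finI: "finite (Ie k)" "finite (Io k)" for k unfolding Ie_def Io_def by auto
    have Esets: "E \<in> sets M"
      unfolding E_def using Kn(1) Ev_prob(1)[OF finI(1) disjE(1)] Ev_prob(1)[OF finI(2) disjE(2)]
      by (intro sets.finite_UN sets.Un) auto
    show ?thesis
    proof (intro bexI[OF _ Esets] conjI)
      show "{\<omega> \<in> space M. T_set (chi \<omega>) (cball 0 \<gamma>) (cball (0::'a) r) \<ge> ennreal (a * r)} \<subseteq> E"
      proof (intro subsetI, elim CollectE conjE, rule ccontr)
        fix \<omega> assume om: "\<omega> \<in> space M" and Tge: "ennreal (a * r) \<le> T_set (chi \<omega>) (cball 0 \<gamma>) (cball 0 r)"
          and nE: "\<omega> \<notin> E"
        have "T_set (chi \<omega>) (cball 0 \<gamma>) (cball 0 r) \<le> ennreal (Bnd r)"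
          unfolding T_set_def
        proof (rule SUP_least)
          fix c :: 'a assume "c \<in> cball 0 r"
          then obtain k where k: "k \<in> Kn" "dist c k \<le> \<rho>" using Kn(3) by blast
          have "T_pt (chi \<omega>) (cball 0 \<gamma>) c \<le> ennreal (2 * real K + real (nk k) + 1)"
            using nE k unfolding E_def Ie_def Io_def
            by (intro chain_path[OF geo om k(2) nk1 nkn wk_def]) auto
          also have "\<dots> \<le> ennreal (Bnd r)"
          proof (intro ennreal_leI)
            define y where "y = 2 * X r / \<theta>"
            define z where "z = (r + \<rho>) / (2 * \<rho>)"
            have "real K \<le> y + 1" "real (nk k) \<le> z + 1" using K1 nkb[OF k(1)] unfolding y_def z_def by auto
            then have "2 * real K + real (nk k) + 1 \<le> 2 * (y + 1) + z + 2" by (simp add: algebra_simps)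
            then show "2 * real K + real (nk k) + 1 \<le> Bnd r" unfolding Bnd_def y_def z_def .
          qed
          finally show "T_pt (chi \<omega>) (cball 0 \<gamma>) c \<le> ennreal (Bnd r)" .
        qed
        also have "ennreal (Bnd r) < ennreal (a * r)"
          using Blt[OF r1] apos r1 by (intro ennreal_lessI) auto
        finally show False using Tge by simp
      qed
      define Y where "Y = (r + \<rho>) / (2 * \<rho>) + 2"
      have cardI: "real (card (Ie k)) \<le> Y" "real (card (Io k)) \<le> Y" if "k \<in> Kn" for k
      proof -
        have "card (Ie k) \<le> card {0..nk k}" by (rule card_mono) (auto simp: Ie_def)
        moreover have "card (Io k) \<le> card {0..nk k}" by (rule card_mono) (auto simp: Io_def)
        ultimately have "card (Ie k) \<le> nk k + 1" "card (Io k) \<le> nk k + 1" by auto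
        then have "real (card (Ie k)) \<le> real (nk k) + 1" "real (card (Io k)) \<le> real (nk k) + 1"
          by auto
        then show "real (card (Ie k)) \<le> Y" "real (card (Io k)) \<le> Y"
          using nkb[OF that] unfolding Y_def by linarith+
      qed
      have powb: "Aq ^ m \<le> exp (Y * lA)" if "real m \<le> Y" for m
      proof -
        have "Aq ^ m = exp (real m * lA)" unfolding Aqe by (simp add: exp_of_nat_mult)
        also have "\<dots> \<le> exp (Y * lA)" using that lA by (simp add: mult_right_mono)
        finally show ?thesis .
      qed
      have evb: "measure M (Ev I (wk k) K) \<le> exp (- \<theta> * real K / 2) * exp (Y * lA)"
        if "k \<in> Kn" "I = Ie k \<or> I = Io k" for I k
      proof -
        have "measure M (Ev I (wk k) K) \<le> exp (- \<theta> * real K / 2) * Aq ^ card I"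
          unfolding Aq_def using that(2) Ev_prob(2)[OF finI(1) disjE(1)] Ev_prob(2)[OF finI(2) disjE(2)] by auto
        also have "\<dots> \<le> exp (- \<theta> * real K / 2) * exp (Y * lA)"
          using that cardI powb by (intro mult_left_mono) auto
        finally show ?thesis .
      qed
      have "measure M E \<le> (\<Sum>k\<in>Kn. measure M (Ev (Ie k) (wk k) K \<union> Ev (Io k) (wk k) K))"
        unfolding E_def using Kn(1) Ev_prob(1)[OF finI(1) disjE(1)] Ev_prob(1)[OF finI(2) disjE(2)]
        by (intro measure_UNION_le) auto
      also have "\<dots> \<le> (\<Sum>k\<in>Kn. 2 * (exp (- \<theta> * real K / 2) * exp (Y * lA)))"
      proof (intro sum_mono)
        fix k assume k: "k \<in> Kn"
        have "measure M (Ev (Ie k) (wk k) K \<union> Ev (Io k) (wk k) K) \<le> measure M (Ev (Ie k) (wk k) K) + measure M (Ev (Io k) (wk k) K)"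
          using Ev_prob(1)[OF finI(1) disjE(1)] Ev_prob(1)[OF finI(2) disjE(2)] by (intro measure_Un_le) auto
        also have "\<dots> \<le> 2 * (exp (- \<theta> * real K / 2) * exp (Y * lA))"
          using evb[OF k, of "Ie k"] evb[OF k, of "Io k"] by simp
        finally show "measure M (Ev (Ie k) (wk k) K \<union> Ev (Io k) (wk k) K) \<le> 2 * (exp (- \<theta> * real K / 2) * exp (Y * lA))" .
      qed
      also have "\<dots> = real (card Kn) * (2 * (exp (- \<theta> * real K / 2) * exp (Y * lA)))" by simp
      also have "\<dots> \<le> exp (2 * real D * (r / \<delta> + 2)) * (2 * (exp (- \<theta> * real K / 2) * exp (Y * lA)))"
      proof (intro mult_right_mono)
        have "real (card Kn) \<le> real ((2 * N + 1) ^ D)" using Kn(2) by (simp only: of_nat_le_iff)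
        also have "\<dots> = (1 + 2 * real N) ^ D" by simp
        also have "\<dots> \<le> exp (2 * real N) ^ D" by (intro power_mono) auto
        also have "\<dots> = exp (real D * (2 * real N))" by (simp add: exp_of_nat_mult)
        also have "\<dots> \<le> exp (2 * real D * (r / \<delta> + 2))"
        proof -
          have "real N \<le> r / \<delta> + 2" unfolding N_def using r0 dl ceiling_correct[of "r / \<delta>"] by simp
          then show ?thesis using D by (simp add: mult_left_mono)
        qed
        finally show "real (card Kn) \<le> exp (2 * real D * (r / \<delta> + 2))" .
      qed auto
      also have "\<dots> = exp (2 * real D * (r / \<delta> + 2) + ln 2 + Y * lA + (- \<theta> * real K / 2))"
        by (rule exp_gen)
      also have "\<dots> \<le> exp (- r)"
      proof -
        have "X r = 2 * real D * (r / \<delta> + 2) + Y * lA + ln 2 + r" unfolding X_def Y_def by simp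
        then have "2 * real D * (r / \<delta> + 2) + ln 2 + Y * lA + (- \<theta> * real K / 2) \<le> - r"
          using K2 by simp
        then show ?thesis by simp
      qed
      finally show "measure M E \<le> exp (- r)" .
    qed
  qed
  have H: "\<forall>r>0. \<exists>E \<in> sets M.
               {\<omega> \<in> space M. T_set (chi \<omega>) (cball 0 \<gamma>) (cball (0::'a) r) \<ge> ennreal (a * r)} \<subseteq> E \<and>
               measure M E \<le> exp 1 * exp (- 1 * r)"
  proof (intro allI impI)
    fix r :: real assume "r > 0"
    show "\<exists>E \<in> sets M.
               {\<omega> \<in> space M. T_set (chi \<omega>) (cball 0 \<gamma>) (cball (0::'a) r) \<ge> ennreal (a * r)} \<subseteq> E \<and>
               measure M E \<le> exp 1 * exp (- 1 * r)"
    proof (cases "r \<ge> 1")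
      case True
      then obtain E where E: "E \<in> sets M"
        "{\<omega> \<in> space M. T_set (chi \<omega>) (cball 0 \<gamma>) (cball (0::'a) r) \<ge> ennreal (a * r)} \<subseteq> E"
        "measure M E \<le> exp (- r)" using main by blast
      have "exp (- r) \<le> exp 1 * exp (- 1 * r)" by simp
      then have "measure M E \<le> exp 1 * exp (- 1 * r)" using E(3) by linarith
      then show ?thesis using E(1,2) by (intro bexI[of _ E]) auto
    next
      case False
      have "measure M (space M) = 1" by (rule MP.prob_space)
      also have "1 \<le> exp 1 * exp (- 1 * r)" using False by (simp add: exp_add[symmetric])
      finally show ?thesis by (intro bexI[of _ "space M"]) auto
    qed
  qed
  show ?thesis
    apply (rule exI[of _ a], rule exI[of _ "exp 1"], rule exI[of _ "1::real"])
    using apos H by simp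
qed

end


lemma claim1_gen:
  fixes Tf :: "'w \<Rightarrow> real \<Rightarrow> ennreal" and M :: "'w measure"
  assumes MP: "prob_space M" and ab: "a > 0" "b > 0" "c > 0"
    and H: "\<forall>r>0. \<exists>E\<in>sets M. {\<omega>\<in>space M. Tf \<omega> r \<ge> ennreal (a*r)} \<subseteq> E \<and> measure M E \<le> b * exp (- c * r)"
    and mono: "\<And>\<omega> r r'. r \<le> r' \<Longrightarrow> Tf \<omega> r \<le> Tf \<omega> r'"
    and R: "R > 0"
  shows "\<exists>g\<in>borel_measurable M. (\<forall>\<omega>\<in>space M. Tf \<omega> R \<le> g \<omega>) \<and>
           (\<integral>\<^sup>+\<omega>. g \<omega> \<partial>M) \<le> ennreal (a * R + a * b / (1 - exp (- c)))"
proof -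
  interpret MP: prob_space M by (rule MP)
  have "\<forall>r. \<exists>E. r > 0 \<longrightarrow> E \<in> sets M \<and> {\<omega>\<in>space M. Tf \<omega> r \<ge> ennreal (a*r)} \<subseteq> E \<and> measure M E \<le> b * exp (- c * r)"
    using H by blast
  then obtain Ef where Ef: "\<And>r. r > 0 \<Longrightarrow> Ef r \<in> sets M \<and> {\<omega>\<in>space M. Tf \<omega> r \<ge> ennreal (a*r)} \<subseteq> Ef r \<and> measure M (Ef r) \<le> b * exp (- c * r)"
    by metis
  have Rk: "R + real k > 0" for k using R by simp
  have Es[measurable]: "Ef (R + real k) \<in> sets M" for k using Ef[OF Rk] by blast
  define g where "g \<omega> = ennreal (a * R) + (\<Sum>k. ennreal a * indicator (Ef (R + real k)) \<omega>)" for \<omega>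
  have gm: "g \<in> borel_measurable M" unfolding g_def by measurable
  define q where "q = exp (- c)"
  have q: "0 \<le> q" "q < 1" unfolding q_def using ab by auto
  have "(\<integral>\<^sup>+\<omega>. g \<omega> \<partial>M) = ennreal (a * R) + (\<integral>\<^sup>+\<omega>. (\<Sum>k. ennreal a * indicator (Ef (R + real k)) \<omega>) \<partial>M)"
    unfolding g_def by (subst nn_integral_add) (auto simp: MP.emeasure_space_1)
  also have "(\<integral>\<^sup>+\<omega>. (\<Sum>k. ennreal a * indicator (Ef (R + real k)) \<omega>) \<partial>M) = (\<Sum>k. ennreal a * emeasure M (Ef (R + real k)))"
    by (subst nn_integral_suminf) (auto simp: nn_integral_cmult_indicator)
  also have "\<dots> \<le> (\<Sum>k. ennreal (a * b * q ^ k))"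
  proof (intro suminf_le)
    fix k
    have "emeasure M (Ef (R + real k)) = ennreal (measure M (Ef (R + real k)))" by (rule MP.emeasure_eq_measure)
    also have "measure M (Ef (R + real k)) \<le> b * exp (- c * (R + real k))" using Ef[OF Rk] by blast
    also have "b * exp (- c * (R + real k)) \<le> b * q ^ k"
    proof -
      have "exp (- c * (R + real k)) = exp (- c * R) * exp (- c) ^ k"
        by (simp add: exp_add[symmetric] exp_of_nat_mult[symmetric] algebra_simps)
      also have "\<dots> \<le> 1 * exp (- c) ^ k" using ab R by (intro mult_right_mono) auto
      finally show ?thesis unfolding q_def using ab by simp
    qed
    finally have "emeasure M (Ef (R + real k)) \<le> ennreal (b * q ^ k)" by (simp add: ennreal_leI)
    then have "ennreal a * emeasure M (Ef (R + real k)) \<le> ennreal a * ennreal (b * q ^ k)" by (rule mult_left_mono) simp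
    then show "ennreal a * emeasure M (Ef (R + real k)) \<le> ennreal (a * b * q ^ k)"
      using ab q by (simp add: ennreal_mult'[symmetric] mult.assoc)
  qed auto
  also have "(\<Sum>k. ennreal (a * b * q ^ k)) = ennreal (\<Sum>k. a * b * q ^ k)"
    using ab q by (intro suminf_ennreal2) (auto intro!: summable_mult summable_geometric)
  also have "(\<Sum>k. a * b * q ^ k) = a * b / (1 - q)"
    using q by (simp add: suminf_mult suminf_geometric summable_geometric divide_inverse)
  finally have int: "(\<integral>\<^sup>+\<omega>. g \<omega> \<partial>M) \<le> ennreal (a * R) + ennreal (a * b / (1 - q))" by (simp add: add_left_mono)
  also have "\<dots> = ennreal (a * R + a * b / (1 - q))" using ab R q by (intro ennreal_plus[symmetric]) auto
  finally have int: "(\<integral>\<^sup>+\<omega>. g \<omega> \<partial>M) \<le> ennreal (a * R + a * b / (1 - exp (- c)))" unfolding q_def .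
  have pt: "Tf \<omega> R \<le> g \<omega>" if om: "\<omega> \<in> space M" for \<omega>
  proof (cases "\<exists>k. \<omega> \<notin> Ef (R + real k)")
    case True
    define K0 where "K0 = (LEAST k. \<omega> \<notin> Ef (R + real k))"
    have nK: "\<omega> \<notin> Ef (R + real K0)" unfolding K0_def using True by (rule LeastI_ex)
    have inK: "\<omega> \<in> Ef (R + real k)" if "k < K0" for k using not_less_Least[OF that[unfolded K0_def]] by blast
    have "\<not> Tf \<omega> (R + real K0) \<ge> ennreal (a * (R + real K0))" using Ef[OF Rk, of K0] nK om by blast
    then have "Tf \<omega> (R + real K0) < ennreal (a * (R + real K0))" by (simp only: not_le)
    then have "Tf \<omega> R < ennreal (a * (R + real K0))" using mono[of R "R + real K0" \<omega>] by (meson le_add_same_cancel1 of_nat_0_le_iff order_le_less_trans)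
    also have "ennreal (a * (R + real K0)) = ennreal (a * R) + (\<Sum>k<K0. ennreal a * indicator (Ef (R + real k)) \<omega>)"
    proof -
      have s: "(\<Sum>k<K0. ennreal a * indicator (Ef (R + real k)) \<omega>) = (\<Sum>k<K0. ennreal a)"
        by (intro sum.cong) (auto simp: inK)
      also have "\<dots> = of_nat K0 * ennreal a" by simp
      also have "\<dots> = ennreal (real K0) * ennreal a" by (simp only: ennreal_of_nat_eq_real_of_nat)
      also have "\<dots> = ennreal (a * real K0)" using ab by (subst ennreal_mult[symmetric]) (auto simp: mult.commute)
      finally have s2: "(\<Sum>k<K0. ennreal a * indicator (Ef (R + real k)) \<omega>) = ennreal (a * real K0)" .
      have "a * (R + real K0) = a * R + a * real K0" by (simp add: distrib_left)
      then have "ennreal (a * (R + real K0)) = ennreal (a * R) + ennreal (a * real K0)"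
        using ab R by (simp add: ennreal_plus)
      then show ?thesis using s2 by simp
    qed
    also have "\<dots> \<le> g \<omega>" unfolding g_def by (intro add_left_mono sum_le_suminf) auto
    finally show ?thesis by simp
  next
    case False
    have "g \<omega> = \<top>"
    proof (rule ccontr)
      assume "g \<omega> \<noteq> \<top>"
      then obtain y where y: "g \<omega> = ennreal y" "y \<ge> 0" by (cases "g \<omega>") auto
      obtain n :: nat where n: "y / a < real n" using reals_Archimedean2 by blast
      have "(\<Sum>k<n. ennreal a * indicator (Ef (R + real k)) \<omega>) = (\<Sum>k<n. ennreal a)"
        using False by (intro sum.cong) auto
      also have "\<dots> = of_nat n * ennreal a" by simp
      also have "\<dots> = ennreal (real n) * ennreal a" by (simp only: ennreal_of_nat_eq_real_of_nat)
      also have "\<dots> = ennreal (a * real n)" using ab by (subst ennreal_mult[symmetric]) (auto simp: mult.commute)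
      finally have "ennreal (a * real n) = (\<Sum>k<n. ennreal a * indicator (Ef (R + real k)) \<omega>)" by simp
      also have "\<dots> \<le> (\<Sum>k. ennreal a * indicator (Ef (R + real k)) \<omega>)" by (intro sum_le_suminf) auto
      also have "\<dots> \<le> g \<omega>" unfolding g_def by simp
      finally have "a * real n \<le> y" using y ab by simp
      then show False using n ab by (simp add: field_simps)
    qed
    then show ?thesis by simp
  qed
  show ?thesis using gm pt int by blast
qed



theorem lemmaB3:
  fixes M :: "'w measure" and \<mu> :: "real measure"
    and chi :: "'w \<Rightarrow> ('a::euclidean_space \<times> real \<times> real) set"
    and \<gamma> :: real
  assumes mu_prob: "prob_space \<mu>"
    and mu_sets: "sets \<mu> = sets borel"
    and mu_pos: "emeasure \<mu> {..0} = 0"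
    and ppp: "poisson_point_process M (fpp_intensity \<mu>) chi"
    and gamma_pos: "\<gamma> > 0"
  shows "(\<exists>C D. C > 0 \<and> D > 0 \<and>
            (\<forall>x::'a. \<exists>g \<in> borel_measurable M.
               (\<forall>\<omega> \<in> space M. T_set (chi \<omega>) (cball 0 \<gamma>) (cball x \<gamma>) \<le> g \<omega>) \<and>
               (\<integral>\<^sup>+ \<omega>. g \<omega> \<partial>M) \<le> ennreal (C * norm x + D)))
       \<and> (\<exists>a b c. a > 0 \<and> b > 0 \<and> c > 0 \<and>
            (\<forall>r > 0. \<exists>E \<in> sets M.
               {\<omega> \<in> space M. T_set (chi \<omega>) (cball 0 \<gamma>) (cball 0 r) \<ge> ennreal (a * r)} \<subseteq> E \<and>
               measure M E \<le> b * exp (- c * r)))"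
proof -
  interpret P: prob_space \<mu> by (rule mu_prob)
  have sp: "space \<mu> = UNIV" using sets_eq_imp_space_eq[OF mu_sets] by simp
  have "\<exists>r0>0. emeasure \<mu> {r0..} > 0"
  proof (rule ccontr)
    assume "\<not> ?thesis"
    then have z0: "\<forall>r0. r0 \<le> 0 \<or> emeasure \<mu> {r0..} = 0" by (simp add: not_less)
    have z: "emeasure \<mu> {1 / real (Suc n)..} = 0" for n
    proof -
      have "\<not> 1 / real (Suc n) \<le> 0" by simp
      then show ?thesis using z0 by blast
    qed
    have "emeasure \<mu> (\<Union>n. {1 / real (Suc n)..}) = 0"
      using z mu_sets by (intro emeasure_UN_eq_0) auto
    moreover have "(\<Union>n. {1 / real (Suc n)..}) = {0<..}"
    proof (intro set_eqI iffI)
      fix x :: real assume "x \<in> (\<Union>n. {1 / real (Suc n)..})"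
      then obtain n where "1 / real (Suc n) \<le> x" by auto
      moreover have "0 < 1 / real (Suc n)" by simp
      ultimately have "0 < x" by linarith
      then show "x \<in> {0<..}" by simp
    next
      fix x :: real assume "x \<in> {0<..}"
      then have x: "x > 0" by simp
      obtain n where "1 / x < real (Suc n)" using reals_Archimedean2 by (metis less_Suc_eq of_nat_Suc order_less_trans lessI of_nat_less_iff)
      then have "1 / real (Suc n) \<le> x" using x by (simp add: field_simps)
      then show "x \<in> (\<Union>n. {1 / real (Suc n)..})" by auto
    qed
    ultimately have z2: "emeasure \<mu> {0<..} = 0" by simp
    have "emeasure \<mu> (space \<mu>) \<le> emeasure \<mu> {..0} + emeasure \<mu> {0<..}"
    proof -
      have "space \<mu> = {..0} \<union> {0<..}" using sp by auto
      then show ?thesis using mu_sets by (simp add: emeasure_subadditive)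
    qed
    then show False using z2 mu_pos P.emeasure_space_1 by simp
  qed
  then obtain r0 where r0: "r0 > 0" "emeasure \<mu> {r0..} > 0" by blast
  define \<rho> where "\<rho> = min \<gamma> (r0 / 4)"
  have rho: "\<rho> > 0" "\<rho> \<le> \<gamma>" "4 * \<rho> \<le> r0" unfolding \<rho>_def using r0 gamma_pos by auto
  interpret F: fppS M \<mu> chi \<rho> r0
    using mu_prob mu_sets ppp rho(1) r0(2) by unfold_locales
  obtain a b c where abc: "a > 0" "b > 0" "c > 0" and
    H: "\<forall>r > 0. \<exists>E \<in> sets M.
               {\<omega> \<in> space M. T_set (chi \<omega>) (cball 0 \<gamma>) (cball (0::'a) r) \<ge> ennreal (a * r)} \<subseteq> E \<and>
               measure M E \<le> b * exp (- c * r)"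
    using F.claim2[OF rho(2,3)] by blast
  have mono: "T_set (chi \<omega>) (cball 0 \<gamma>) (cball (0::'a) r) \<le> T_set (chi \<omega>) (cball 0 \<gamma>) (cball 0 r')"
    if "r \<le> r'" for \<omega> r r'
    unfolding T_set_def using that by (intro SUP_subset_mono) auto
  define D where "D = a * \<gamma> + a * b / (1 - exp (- c))"
  have Dpos: "D > 0" unfolding D_def using abc gamma_pos by (intro add_pos_nonneg) auto
  have part1: "\<forall>x::'a. \<exists>g \<in> borel_measurable M.
               (\<forall>\<omega> \<in> space M. T_set (chi \<omega>) (cball 0 \<gamma>) (cball x \<gamma>) \<le> g \<omega>) \<and>
               (\<integral>\<^sup>+ \<omega>. g \<omega> \<partial>M) \<le> ennreal (a * norm x + D)"
  proof
    fix x :: 'a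
    define R where "R = norm x + \<gamma>"
    have R: "R > 0" unfolding R_def using gamma_pos norm_ge_zero[of x] by linarith
    obtain g where g: "g \<in> borel_measurable M" "\<forall>\<omega>\<in>space M. T_set (chi \<omega>) (cball 0 \<gamma>) (cball (0::'a) R) \<le> g \<omega>"
      "(\<integral>\<^sup>+\<omega>. g \<omega> \<partial>M) \<le> ennreal (a * R + a * b / (1 - exp (- c)))"
      using claim1_gen[OF F.M_prob abc H mono R] by blast
    have sub: "T_set (chi \<omega>) (cball 0 \<gamma>) (cball x \<gamma>) \<le> T_set (chi \<omega>) (cball 0 \<gamma>) (cball 0 R)" for \<omega>
      unfolding T_set_def
    proof (intro SUP_subset_mono order_refl subsetI)
      fix y assume "y \<in> cball x \<gamma>"
      then have "norm y \<le> norm x + \<gamma>" using norm_triangle_sub[of y x] by (simp add: dist_norm norm_minus_commute)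
      then show "y \<in> cball 0 R" unfolding R_def by simp
    qed
    have "a * R + a * b / (1 - exp (- c)) = a * norm x + D" unfolding R_def D_def by (simp add: algebra_simps)
    then show "\<exists>g \<in> borel_measurable M.
               (\<forall>\<omega> \<in> space M. T_set (chi \<omega>) (cball 0 \<gamma>) (cball x \<gamma>) \<le> g \<omega>) \<and>
               (\<integral>\<^sup>+ \<omega>. g \<omega> \<partial>M) \<le> ennreal (a * norm x + D)"
      using g sub by (intro bexI[of _ g]) (auto intro: order_trans)
  qed
  show ?thesis using part1 abc Dpos H by blast
qed


end
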